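(* Let $k$ be a field of characteristic zero, $\mathcal{A}$ a split $k$-linear abelian category, and $\mathbb{G}=\pi_1[1]\rtimes_z\pi_0[0]$ a strict skeletal 2-group with $\pi_0$ and $\pi_1$ finite. Let $V_\bullet=(0:V_1\to V_0)$ be an object of $\mathbf{Ch}'_2(\mathcal{A})$ and let $(\rho_1,\rho_0,\beta,c)$ be a representation of $\mathbb{G}$ on $V_\bullet$. Then (i) $\beta=0$, and (ii) the representation $(\rho_1,\rho_0,0,c)$ is equivalent, in the 2-category $\mathbf{Rep}_{\mathbf{Ch}_2(\mathcal{A})}(\mathbb{G})$, to $(\rho_1,\rho_0,0,0)$. In particular, up to equivalence a representation of $\mathbb{G}$ in $\mathbf{Ch}'_2(\mathcal{A})$ is completely determined by a pair of representations $\rho_1,\rho_0$ of $\pi_0$ in $\mathcal{A}$.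
   Context: $\mathbf{Ch}_2(\mathcal{A})$: the strict 2-category whose objects are morphisms $d:V_1\to V_0$ in $\mathcal{A}$; 1-cells $(f_1,f_0)$ are commuting squares; 2-cells $\sigma:(f_1,f_0)\Rightarrow(g_1,g_0)$ are morphisms $\sigma:V_0\to W_1$ with $d_W\sigma=g_0-f_0$, $\sigma d_V=g_1-f_1$; 1-cells compose componentwise, 2-cells compose vertically by addition, horizontal composite of $\sigma:f\Rightarrow g$ and $\sigma':f'\Rightarrow g'$ is $f'_1\sigma+\sigma' g_0$. $\mathbf{Ch}'_2(\mathcal{A})$ is its full sub-2-category on objects with zero differential. $\mathcal{A}$ split means every short exact sequence splits. The strict skeletal 2-group $\mathbb{G}=\pi_1[1]\rtimes_z\pi_0[0]$ is given by a group $\pi_0$, a left $\pi_0$-module $\pi_1$ (action $\rhd$) and a normalized 3-cocycle $z:\pi_0^3\to\pi_1$: its objects are elements of $\pi_0$, morphisms are pairs $(a,g):g\to g$ with $a\in\pi_1$, composition is addition in $\pi_1$, tensor product is $g\otimes g'=gg'$ and $(a,g)\otimes(a',g')=(a+g\rhd a',gg')$, associator $\alpha_{g,g',g''}=(z(g,g',g''),gg'g'')$, trivial unitors. $\mathbf{Rep}_{\mathbf{Ch}_2(\mathcal{A})}(\mathbb{G})$ is the 2-category of pseudofunctors $\mathbb{G}[1]\to\mathbf{Ch}_2(\mathcal{A})$ (where $\mathbb{G}[1]$ is the one-object bicategory with $\mathbb{G}$ as endomorphism 2-group), pseudonatural transformations and modifications; equivalence means equivalence in this 2-category. A representation $(\rho_1,\rho_0,\beta,c)$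 of $\mathbb{G}$ on $V_\bullet=(0:V_1\to V_0)$ is the pseudofunctor sending the unique object to $V_\bullet$, each $g\in\pi_0$ to the 1-cell $(\rho_1(g),\rho_0(g))$, each morphism $(a,g)$ to the 2-cell $\beta(a):V_0\to V_1$, with compositor $f^g\circ f^h\Rightarrow f^{gh}$ given by $c(g,h):V_0\to V_1$ and trivial unit constraint. Here $\rho_i:\pi_0\to\mathrm{Aut}_\mathcal{A}(V_i)$ are group homomorphisms, $\beta:\pi_1\to\mathcal{A}(V_0,V_1)$ is a morphism of left $\pi_0$-modules where $\pi_0$ acts on $\mathcal{A}(V_0,V_1)$ by $g\cdot\sigma=\rho_1(g)\circ\sigma\circ\rho_0(g)^{-1}$, and $c:\pi_0^2\to\mathcal{A}(V_0,V_1)$ is a normalized 2-cochain whose coboundary (for this module structure) equals $\beta\circ z$; these conditions are exactly the pseudofunctor axioms. *)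

theory Defs
  imports "HOL-Algebra.Group"
begin

text \<open>A category with object set, hom-sets, composition (c_cmp g f = g o f),
identities, and k-vector-space structure on each hom-set (zero, addition, scalar
multiplication). Hom-sets of distinct pairs of objects are disjoint, so a single
global addition/scalar multiplication is meaningful.\<close>

record ('o, 'm, 'k) kcat =
  c_obj :: "'o set"
  c_hom :: "'o \<Rightarrow> 'o \<Rightarrow> 'm set"
  c_cmp :: "'m \<Rightarrow> 'm \<Rightarrow> 'm"
  c_id :: "'o \<Rightarrow> 'm"
  c_zero :: "'o \<Rightarrow> 'o \<Rightarrow> 'm"
  c_add :: "'m \<Rightarrow> 'm \<Rightarrow> 'm"
  c_smult :: "'k \<Rightarrow> 'm \<Rightarrow> 'm"

definition klinear_cat :: "('o, 'm, 'k::field) kcat \<Rightarrow> bool" where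
  "klinear_cat C \<longleftrightarrow>
     (\<forall>a b a' b' f. f \<in> c_hom C a b \<and> f \<in> c_hom C a' b' \<longrightarrow> a = a' \<and> b = b') \<and>
     (\<forall>a b. (a \<notin> c_obj C \<or> b \<notin> c_obj C) \<longrightarrow> c_hom C a b = {}) \<and>
     (\<forall>a\<in>c_obj C. c_id C a \<in> c_hom C a a) \<and>
     (\<forall>a b c f g. f \<in> c_hom C a b \<and> g \<in> c_hom C b c \<longrightarrow> c_cmp C g f \<in> c_hom C a c) \<and>
     (\<forall>a b c d f g h. f \<in> c_hom C a b \<and> g \<in> c_hom C b c \<and> h \<in> c_hom C c d \<longrightarrow>
        c_cmp C h (c_cmp C g f) = c_cmp C (c_cmp C h g) f) \<and>
     (\<forall>a b f. f \<in> c_hom C a b \<longrightarrow> c_cmp C (c_id C b) f = f \<and> c_cmp C f (c_id C a) = f) \<and>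
     (\<forall>a\<in>c_obj C. \<forall>b\<in>c_obj C.
        c_zero C a b \<in> c_hom C a b \<and>
        (\<forall>f\<in>c_hom C a b. \<forall>g\<in>c_hom C a b. c_add C f g \<in> c_hom C a b \<and> c_add C f g = c_add C g f) \<and>
        (\<forall>f\<in>c_hom C a b. \<forall>g\<in>c_hom C a b. \<forall>h\<in>c_hom C a b.
            c_add C (c_add C f g) h = c_add C f (c_add C g h)) \<and>
        (\<forall>f\<in>c_hom C a b. c_add C f (c_zero C a b) = f \<and>
                          c_add C f (c_smult C (-1) f) = c_zero C a b \<and>
                          c_smult C 1 f = f) \<and>
        (\<forall>f\<in>c_hom C a b. \<forall>x y. c_smult C x f \<in> c_hom C a b \<and>
            c_smult C (x + y) f = c_add C (c_smult C x f) (c_smult C y f) \<and>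
            c_smult C (x * y) f = c_smult C x (c_smult C y f)) \<and>
        (\<forall>f\<in>c_hom C a b. \<forall>g\<in>c_hom C a b. \<forall>x.
            c_smult C x (c_add C f g) = c_add C (c_smult C x f) (c_smult C x g))) \<and>
     (\<forall>a b c f g g' x. f \<in> c_hom C a b \<and> g \<in> c_hom C b c \<and> g' \<in> c_hom C b c \<longrightarrow>
        c_cmp C (c_add C g g') f = c_add C (c_cmp C g f) (c_cmp C g' f) \<and>
        c_cmp C (c_smult C x g) f = c_smult C x (c_cmp C g f)) \<and>
     (\<forall>a b c f f' g x. f \<in> c_hom C a b \<and> f' \<in> c_hom C a b \<and> g \<in> c_hom C b c \<longrightarrow>
        c_cmp C g (c_add C f f') = c_add C (c_cmp C g f) (c_cmp C g f') \<and>
        c_cmp C g (c_smult C x f) = c_smult C x (c_cmp C g f))"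

definition is_mono :: "('o, 'm, 'k) kcat \<Rightarrow> 'm \<Rightarrow> bool" where
  "is_mono C f \<longleftrightarrow> (\<exists>a b. f \<in> c_hom C a b \<and>
     (\<forall>c g h. g \<in> c_hom C c a \<and> h \<in> c_hom C c a \<and> c_cmp C f g = c_cmp C f h \<longrightarrow> g = h))"

definition is_epi :: "('o, 'm, 'k) kcat \<Rightarrow> 'm \<Rightarrow> bool" where
  "is_epi C f \<longleftrightarrow> (\<exists>a b. f \<in> c_hom C a b \<and>
     (\<forall>c g h. g \<in> c_hom C b c \<and> h \<in> c_hom C b c \<and> c_cmp C g f = c_cmp C h f \<longrightarrow> g = h))"

definition is_kernel :: "('o, 'm, 'k) kcat \<Rightarrow> 'm \<Rightarrow> 'm \<Rightarrow> bool" where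
  "is_kernel C k f \<longleftrightarrow> (\<exists>K a b. k \<in> c_hom C K a \<and> f \<in> c_hom C a b \<and>
     c_cmp C f k = c_zero C K b \<and>
     (\<forall>c g. g \<in> c_hom C c a \<and> c_cmp C f g = c_zero C c b \<longrightarrow>
        (\<exists>!u. u \<in> c_hom C c K \<and> c_cmp C k u = g)))"

definition is_cokernel :: "('o, 'm, 'k) kcat \<Rightarrow> 'm \<Rightarrow> 'm \<Rightarrow> bool" where
  "is_cokernel C q f \<longleftrightarrow> (\<exists>a b Q. f \<in> c_hom C a b \<and> q \<in> c_hom C b Q \<and>
     c_cmp C q f = c_zero C a Q \<and>
     (\<forall>c g. g \<in> c_hom C b c \<and> c_cmp C g f = c_zero C a c \<longrightarrow>
        (\<exists>!u. u \<in> c_hom C Q c \<and> c_cmp C u q = g)))"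

definition is_zero_object :: "('o, 'm, 'k) kcat \<Rightarrow> 'o \<Rightarrow> bool" where
  "is_zero_object C z \<longleftrightarrow> z \<in> c_obj C \<and>
     (\<forall>a\<in>c_obj C. (\<exists>!f. f \<in> c_hom C z a) \<and> (\<exists>!f. f \<in> c_hom C a z))"

definition is_biproduct :: "('o, 'm, 'k) kcat \<Rightarrow> 'o \<Rightarrow> 'o \<Rightarrow> 'o \<Rightarrow> 'm \<Rightarrow> 'm \<Rightarrow> 'm \<Rightarrow> 'm \<Rightarrow> bool" where
  "is_biproduct C a b p i1 i2 p1 p2 \<longleftrightarrow>
     p \<in> c_obj C \<and> i1 \<in> c_hom C a p \<and> i2 \<in> c_hom C b p \<and> p1 \<in> c_hom C p a \<and> p2 \<in> c_hom C p b \<and>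
     c_cmp C p1 i1 = c_id C a \<and> c_cmp C p2 i2 = c_id C b \<and>
     c_cmp C p1 i2 = c_zero C b a \<and> c_cmp C p2 i1 = c_zero C a b \<and>
     c_add C (c_cmp C i1 p1) (c_cmp C i2 p2) = c_id C p"

definition abelian_kcat :: "('o, 'm, 'k::field) kcat \<Rightarrow> bool" where
  "abelian_kcat C \<longleftrightarrow> klinear_cat C \<and>
     (\<exists>z. is_zero_object C z) \<and>
     (\<forall>a\<in>c_obj C. \<forall>b\<in>c_obj C. \<exists>p i1 i2 p1 p2. is_biproduct C a b p i1 i2 p1 p2) \<and>
     (\<forall>a b f. f \<in> c_hom C a b \<longrightarrow> (\<exists>k. is_kernel C k f) \<and> (\<exists>q. is_cokernel C q f)) \<and>
     (\<forall>m. is_mono C m \<longrightarrow> (\<exists>f. is_kernel C m f)) \<and>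
     (\<forall>e. is_epi C e \<longrightarrow> (\<exists>f. is_cokernel C e f))"

definition short_exact :: "('o, 'm, 'k) kcat \<Rightarrow> 'm \<Rightarrow> 'm \<Rightarrow> bool" where
  "short_exact C f g \<longleftrightarrow> is_mono C f \<and> is_epi C g \<and> is_kernel C f g \<and> is_cokernel C g f"

definition split_cat :: "('o, 'm, 'k) kcat \<Rightarrow> bool" where
  "split_cat C \<longleftrightarrow> (\<forall>a b c f g. f \<in> c_hom C a b \<and> g \<in> c_hom C b c \<and> short_exact C f g \<longrightarrow>
     (\<exists>s\<in>c_hom C c b. c_cmp C g s = c_id C c))"

text \<open>pi_0 = G (a group), pi_1 = M (an abelian group, written multiplicatively in HOL-Algebra)
with left action act, and z a normalized 3-cocycle.\<close>
definition skeletal_2group :: "('g, 'x) monoid_scheme \<Rightarrow> ('a, 'y) monoid_scheme \<Rightarrow>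
    ('g \<Rightarrow> 'a \<Rightarrow> 'a) \<Rightarrow> ('g \<Rightarrow> 'g \<Rightarrow> 'g \<Rightarrow> 'a) \<Rightarrow> bool" where
  "skeletal_2group G M act z \<longleftrightarrow> group G \<and> comm_group M \<and>
     (\<forall>g\<in>carrier G. \<forall>a\<in>carrier M. act g a \<in> carrier M) \<and>
     (\<forall>a\<in>carrier M. act \<one>\<^bsub>G\<^esub> a = a) \<and>
     (\<forall>g\<in>carrier G. \<forall>h\<in>carrier G. \<forall>a\<in>carrier M. act (g \<otimes>\<^bsub>G\<^esub> h) a = act g (act h a)) \<and>
     (\<forall>g\<in>carrier G. \<forall>a\<in>carrier M. \<forall>b\<in>carrier M.
        act g (a \<otimes>\<^bsub>M\<^esub> b) = act g a \<otimes>\<^bsub>M\<^esub> act g b) \<and>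
     (\<forall>g\<in>carrier G. \<forall>h\<in>carrier G. \<forall>k\<in>carrier G. z g h k \<in> carrier M) \<and>
     (\<forall>g\<in>carrier G. \<forall>h\<in>carrier G.
        z \<one>\<^bsub>G\<^esub> g h = \<one>\<^bsub>M\<^esub> \<and> z g \<one>\<^bsub>G\<^esub> h = \<one>\<^bsub>M\<^esub> \<and> z g h \<one>\<^bsub>G\<^esub> = \<one>\<^bsub>M\<^esub>) \<and>
     (\<forall>g\<in>carrier G. \<forall>h\<in>carrier G. \<forall>k\<in>carrier G. \<forall>l\<in>carrier G.
        act g (z h k l) \<otimes>\<^bsub>M\<^esub> z g (h \<otimes>\<^bsub>G\<^esub> k) l \<otimes>\<^bsub>M\<^esub> z g h k
        = z (g \<otimes>\<^bsub>G\<^esub> h) k l \<otimes>\<^bsub>M\<^esub> z g h (k \<otimes>\<^bsub>G\<^esub> l))"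

text \<open>A representation (rho1, rho0, beta, c) on V = (0 : V1 -> V0): the pseudofunctor
G[1] -> Ch_2(A) sending g to the 1-cell (rho1 g, rho0 g), (a,g) to the 2-cell beta a,
with compositor c g h : F(g) o F(h) => F(gh) and trivial unit constraint.
is_rep spells out the pseudofunctor axioms, computed with the composition laws of
Ch_2(A) (vertical composition = addition, horizontal composite of s : f => g and
s' : f' => g' is f'_1 s + s' g_0), specialized to zero differentials.\<close>

type_synonym ('g, 'a, 'm) repdata = "('g \<Rightarrow> 'm) \<times> ('g \<Rightarrow> 'm) \<times> ('a \<Rightarrow> 'm) \<times> ('g \<Rightarrow> 'g \<Rightarrow> 'm)"

definition is_rep :: "('o, 'm, 'k) kcat \<Rightarrow> ('g, 'x) monoid_scheme \<Rightarrow> ('a, 'y) monoid_scheme \<Rightarrow>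
    ('g \<Rightarrow> 'a \<Rightarrow> 'a) \<Rightarrow> ('g \<Rightarrow> 'g \<Rightarrow> 'g \<Rightarrow> 'a) \<Rightarrow> 'o \<Rightarrow> 'o \<Rightarrow> ('g, 'a, 'm) repdata \<Rightarrow> bool" where
  "is_rep C G M act z V1 V0 F \<longleftrightarrow> (case F of (\<rho>1, \<rho>0, \<beta>, c) \<Rightarrow>
     V1 \<in> c_obj C \<and> V0 \<in> c_obj C \<and>
     \<comment> \<open>1-cells and 2-cells land in the right hom-sets\<close>
     (\<forall>g\<in>carrier G. \<rho>1 g \<in> c_hom C V1 V1 \<and> \<rho>0 g \<in> c_hom C V0 V0) \<and>
     (\<forall>a\<in>carrier M. \<beta> a \<in> c_hom C V0 V1) \<and>
     (\<forall>g\<in>carrier G. \<forall>h\<in>carrier G. c g h \<in> c_hom C V0 V1) \<and>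
     \<comment> \<open>c g h is a 2-cell F(g) o F(h) => F(gh); with d = 0 this forces equality of 1-cells\<close>
     (\<forall>g\<in>carrier G. \<forall>h\<in>carrier G.
        \<rho>1 (g \<otimes>\<^bsub>G\<^esub> h) = c_cmp C (\<rho>1 g) (\<rho>1 h) \<and> \<rho>0 (g \<otimes>\<^bsub>G\<^esub> h) = c_cmp C (\<rho>0 g) (\<rho>0 h)) \<and>
     \<comment> \<open>trivial unit constraint and unit axioms\<close>
     \<rho>1 \<one>\<^bsub>G\<^esub> = c_id C V1 \<and> \<rho>0 \<one>\<^bsub>G\<^esub> = c_id C V0 \<and>
     (\<forall>g\<in>carrier G. c \<one>\<^bsub>G\<^esub> g = c_zero C V0 V1 \<and> c g \<one>\<^bsub>G\<^esub> = c_zero C V0 V1) \<and>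
     \<comment> \<open>functoriality on 2-cells (vertical composition)\<close>
     (\<forall>a\<in>carrier M. \<forall>b\<in>carrier M. \<beta> (a \<otimes>\<^bsub>M\<^esub> b) = c_add C (\<beta> a) (\<beta> b)) \<and>
     \<beta> \<one>\<^bsub>M\<^esub> = c_zero C V0 V1 \<and>
     \<comment> \<open>naturality of the compositor\<close>
     (\<forall>g\<in>carrier G. \<forall>h\<in>carrier G. \<forall>a\<in>carrier M. \<forall>b\<in>carrier M.
        c_add C (c_add C (c_cmp C (\<rho>1 g) (\<beta> b)) (c_cmp C (\<beta> a) (\<rho>0 h))) (c g h)
        = c_add C (c g h) (\<beta> (a \<otimes>\<^bsub>M\<^esub> act g b))) \<and>
     \<comment> \<open>associativity (hexagon) axiom, associator (z(g,h,k), ghk)\<close>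
     (\<forall>g\<in>carrier G. \<forall>h\<in>carrier G. \<forall>k\<in>carrier G.
        c_add C (c_add C (c_cmp C (c g h) (\<rho>0 k)) (c (g \<otimes>\<^bsub>G\<^esub> h) k)) (\<beta> (z g h k))
        = c_add C (c_cmp C (\<rho>1 g) (c h k)) (c g (h \<otimes>\<^bsub>G\<^esub> k))))"

section \<open>The 2-category Rep: pseudonatural transformations and modifications\<close>

type_synonym ('g, 'm) transdata = "'m \<times> 'm \<times> ('g \<Rightarrow> 'm)"

text \<open>A pseudonatural transformation F => F' (F on V, F' on W): a 1-cell (t1,t0) : V -> W
and for each g a 2-cell theta g : F'(g) o t => t o F(g).\<close>
definition is_trans :: "('o, 'm, 'k) kcat \<Rightarrow> ('g, 'x) monoid_scheme \<Rightarrow> ('a, 'y) monoid_scheme \<Rightarrow>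
    'o \<Rightarrow> 'o \<Rightarrow> ('g, 'a, 'm) repdata \<Rightarrow> 'o \<Rightarrow> 'o \<Rightarrow> ('g, 'a, 'm) repdata \<Rightarrow> ('g, 'm) transdata \<Rightarrow> bool" where
  "is_trans C G M V1 V0 F W1 W0 F' T \<longleftrightarrow>
    (case F of (\<rho>1, \<rho>0, \<beta>, c) \<Rightarrow> case F' of (\<sigma>1, \<sigma>0, \<beta>', c') \<Rightarrow> case T of (t1, t0, \<theta>) \<Rightarrow>
     t1 \<in> c_hom C V1 W1 \<and> t0 \<in> c_hom C V0 W0 \<and>
     (\<forall>g\<in>carrier G. \<theta> g \<in> c_hom C V0 W1 \<and>
        c_cmp C t1 (\<rho>1 g) = c_cmp C (\<sigma>1 g) t1 \<and> c_cmp C t0 (\<rho>0 g) = c_cmp C (\<sigma>0 g) t0) \<and>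
     (\<forall>g\<in>carrier G. \<forall>a\<in>carrier M.
        c_add C (c_cmp C (\<beta>' a) t0) (\<theta> g) = c_add C (\<theta> g) (c_cmp C t1 (\<beta> a))) \<and>
     (\<forall>g\<in>carrier G. \<forall>h\<in>carrier G.
        c_add C (c_cmp C (c' g h) t0) (\<theta> (g \<otimes>\<^bsub>G\<^esub> h))
        = c_add C (c_add C (c_cmp C (\<sigma>1 g) (\<theta> h)) (c_cmp C (\<theta> g) (\<rho>0 h))) (c_cmp C t1 (c g h))) \<and>
     \<theta> \<one>\<^bsub>G\<^esub> = c_zero C V0 W1)"

text \<open>Composite of T : F => F' and T' : F' => F'' (T first).\<close>
definition trans_comp :: "('o, 'm, 'k) kcat \<Rightarrow> ('g, 'm) transdata \<Rightarrow> ('g, 'm) transdata \<Rightarrow> ('g, 'm) transdata" where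
  "trans_comp C T' T = (case T' of (t1', t0', \<theta>') \<Rightarrow> case T of (t1, t0, \<theta>) \<Rightarrow>
     (c_cmp C t1' t1, c_cmp C t0' t0, \<lambda>g. c_add C (c_cmp C (\<theta>' g) t0) (c_cmp C t1' (\<theta> g))))"

definition trans_id :: "('o, 'm, 'k) kcat \<Rightarrow> 'o \<Rightarrow> 'o \<Rightarrow> ('g, 'm) transdata" where
  "trans_id C V1 V0 = (c_id C V1, c_id C V0, \<lambda>g. c_zero C V0 V1)"

text \<open>A modification Gamma : T => S between transformations F => F' (2-cell t => s in Ch_2).\<close>
definition is_modif :: "('o, 'm, 'k) kcat \<Rightarrow> ('g, 'x) monoid_scheme \<Rightarrow>
    'o \<Rightarrow> 'o \<Rightarrow> ('g, 'a, 'm) repdata \<Rightarrow> 'o \<Rightarrow> 'o \<Rightarrow> ('g, 'a, 'm) repdata \<Rightarrow>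
    ('g, 'm) transdata \<Rightarrow> ('g, 'm) transdata \<Rightarrow> 'm \<Rightarrow> bool" where
  "is_modif C G V1 V0 F W1 W0 F' T S \<Gamma> \<longleftrightarrow>
    (case F of (\<rho>1, \<rho>0, \<beta>, c) \<Rightarrow> case F' of (\<sigma>1, \<sigma>0, \<beta>', c') \<Rightarrow>
     case T of (t1, t0, \<theta>) \<Rightarrow> case S of (s1, s0, \<psi>) \<Rightarrow>
     \<Gamma> \<in> c_hom C V0 W1 \<and> s1 = t1 \<and> s0 = t0 \<and>
     (\<forall>g\<in>carrier G. c_add C (c_cmp C (\<sigma>1 g) \<Gamma>) (\<psi> g) = c_add C (\<theta> g) (c_cmp C \<Gamma> (\<rho>0 g))))"

definition is_inv_modif :: "('o, 'm, 'k) kcat \<Rightarrow> ('g, 'x) monoid_scheme \<Rightarrow>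
    'o \<Rightarrow> 'o \<Rightarrow> ('g, 'a, 'm) repdata \<Rightarrow> 'o \<Rightarrow> 'o \<Rightarrow> ('g, 'a, 'm) repdata \<Rightarrow>
    ('g, 'm) transdata \<Rightarrow> ('g, 'm) transdata \<Rightarrow> 'm \<Rightarrow> bool" where
  "is_inv_modif C G V1 V0 F W1 W0 F' T S \<Gamma> \<longleftrightarrow>
     is_modif C G V1 V0 F W1 W0 F' T S \<Gamma> \<and>
     (\<exists>\<Gamma>'. is_modif C G V1 V0 F W1 W0 F' S T \<Gamma>' \<and>
        c_add C \<Gamma> \<Gamma>' = c_zero C V0 W1 \<and> c_add C \<Gamma>' \<Gamma> = c_zero C V0 W1)"

definition rep_equiv :: "('o, 'm, 'k) kcat \<Rightarrow> ('g, 'x) monoid_scheme \<Rightarrow> ('a, 'y) monoid_scheme \<Rightarrow>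
    'o \<Rightarrow> 'o \<Rightarrow> ('g, 'a, 'm) repdata \<Rightarrow> 'o \<Rightarrow> 'o \<Rightarrow> ('g, 'a, 'm) repdata \<Rightarrow> bool" where
  "rep_equiv C G M V1 V0 F W1 W0 F' \<longleftrightarrow>
     (\<exists>T T' \<Gamma> \<Gamma>'.
        is_trans C G M V1 V0 F W1 W0 F' T \<and> is_trans C G M W1 W0 F' V1 V0 F T' \<and>
        is_inv_modif C G V1 V0 F V1 V0 F (trans_comp C T' T) (trans_id C V1 V0) \<Gamma> \<and>
        is_inv_modif C G W1 W0 F' W1 W0 F' (trans_comp C T T') (trans_id C W1 W0) \<Gamma>')"

end

theory Submission
  imports Defs "HOL-Algebra.Multiplicative_Group"
begin

locale kc =
  fixes C :: "('o, 'm, 'k::field_char_0) kcat"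
  assumes kl: "klinear_cat C"
begin

abbreviation "Hom \<equiv> c_hom C"
abbreviation "Cmp \<equiv> c_cmp C"
abbreviation "Add \<equiv> c_add C"
abbreviation "Zer \<equiv> c_zero C"
abbreviation "Sm \<equiv> c_smult C"

lemma K: "(\<forall>a b a' b' f. f \<in> c_hom C a b \<and> f \<in> c_hom C a' b' \<longrightarrow> a = a' \<and> b = b')"
  "(\<forall>a b. (a \<notin> c_obj C \<or> b \<notin> c_obj C) \<longrightarrow> c_hom C a b = {})"
  "(\<forall>a\<in>c_obj C. c_id C a \<in> c_hom C a a)"
  "(\<forall>a b c f g. f \<in> c_hom C a b \<and> g \<in> c_hom C b c \<longrightarrow> c_cmp C g f \<in> c_hom C a c)"
  "(\<forall>a b c d f g h. f \<in> c_hom C a b \<and> g \<in> c_hom C b c \<and> h \<in> c_hom C c d \<longrightarrow>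
        c_cmp C h (c_cmp C g f) = c_cmp C (c_cmp C h g) f)"
  "(\<forall>a b f. f \<in> c_hom C a b \<longrightarrow> c_cmp C (c_id C b) f = f \<and> c_cmp C f (c_id C a) = f)"
  "(\<forall>a\<in>c_obj C. \<forall>b\<in>c_obj C.
        c_zero C a b \<in> c_hom C a b \<and>
        (\<forall>f\<in>c_hom C a b. \<forall>g\<in>c_hom C a b. c_add C f g \<in> c_hom C a b \<and> c_add C f g = c_add C g f) \<and>
        (\<forall>f\<in>c_hom C a b. \<forall>g\<in>c_hom C a b. \<forall>h\<in>c_hom C a b.
            c_add C (c_add C f g) h = c_add C f (c_add C g h)) \<and>
        (\<forall>f\<in>c_hom C a b. c_add C f (c_zero C a b) = f \<and>
                          c_add C f (c_smult C (-1) f) = c_zero C a b \<and>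
                          c_smult C 1 f = f) \<and>
        (\<forall>f\<in>c_hom C a b. \<forall>x y. c_smult C x f \<in> c_hom C a b \<and>
            c_smult C (x + y) f = c_add C (c_smult C x f) (c_smult C y f) \<and>
            c_smult C (x * y) f = c_smult C x (c_smult C y f)) \<and>
        (\<forall>f\<in>c_hom C a b. \<forall>g\<in>c_hom C a b. \<forall>x.
            c_smult C x (c_add C f g) = c_add C (c_smult C x f) (c_smult C x g)))"
  "(\<forall>a b c f g g' x. f \<in> c_hom C a b \<and> g \<in> c_hom C b c \<and> g' \<in> c_hom C b c \<longrightarrow>
        c_cmp C (c_add C g g') f = c_add C (c_cmp C g f) (c_cmp C g' f) \<and>
        c_cmp C (c_smult C x g) f = c_smult C x (c_cmp C g f))"
  "(\<forall>a b c f f' g x. f \<in> c_hom C a b \<and> f' \<in> c_hom C a b \<and> g \<in> c_hom C b c \<longrightarrow>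
        c_cmp C g (c_add C f f') = c_add C (c_cmp C g f) (c_cmp C g f') \<and>
        c_cmp C g (c_smult C x f) = c_smult C x (c_cmp C g f))"
  using kl unfolding klinear_cat_def apply - by (elim conjE, assumption)+

lemma hom_obj: "f \<in> Hom a b \<Longrightarrow> a \<in> c_obj C \<and> b \<in> c_obj C"
  using K(2) by blast

lemma id_hom: "a \<in> c_obj C \<Longrightarrow> c_id C a \<in> Hom a a"
  using K(3) by blast

lemma cmp_hom: "f \<in> Hom a b \<Longrightarrow> g \<in> Hom b c \<Longrightarrow> Cmp g f \<in> Hom a c"
  using K(4) by blast

lemma cmp_assoc: "f \<in> Hom a b \<Longrightarrow> g \<in> Hom b c \<Longrightarrow> h \<in> Hom c d \<Longrightarrow>
   Cmp h (Cmp g f) = Cmp (Cmp h g) f"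
  using K(5) by blast

lemma id_l: "f \<in> Hom a b \<Longrightarrow> Cmp (c_id C b) f = f"
  using K(6) by blast
lemma id_r: "f \<in> Hom a b \<Longrightarrow> Cmp f (c_id C a) = f"
  using K(6) by blast

lemma zero_hom: "a \<in> c_obj C \<Longrightarrow> b \<in> c_obj C \<Longrightarrow> Zer a b \<in> Hom a b"
  using K(7) by blast

lemma add_hom: "f \<in> Hom a b \<Longrightarrow> g \<in> Hom a b \<Longrightarrow> Add f g \<in> Hom a b"
  using K(7) hom_obj[of f a b] by blast
lemma add_comm: "f \<in> Hom a b \<Longrightarrow> g \<in> Hom a b \<Longrightarrow> Add f g = Add g f"
  using K(7) hom_obj[of f a b] by blast
lemma add_assoc: "f \<in> Hom a b \<Longrightarrow> g \<in> Hom a b \<Longrightarrow> h \<in> Hom a b \<Longrightarrow>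
   Add (Add f g) h = Add f (Add g h)"
  using K(7) hom_obj[of f a b] by blast
lemma add_zero: "f \<in> Hom a b \<Longrightarrow> Add f (Zer a b) = f"
  using K(7) hom_obj[of f a b] by blast
lemma add_neg: "f \<in> Hom a b \<Longrightarrow> Add f (Sm (-1) f) = Zer a b"
  using K(7) hom_obj[of f a b] by blast
lemma sm_one: "f \<in> Hom a b \<Longrightarrow> Sm 1 f = f"
  using K(7) hom_obj[of f a b] by blast
lemma sm_hom: "f \<in> Hom a b \<Longrightarrow> Sm x f \<in> Hom a b"
  using K(7) hom_obj[of f a b] by blast
lemma sm_add_scal: "f \<in> Hom a b \<Longrightarrow> Sm (x + y) f = Add (Sm x f) (Sm y f)"
  using K(7) hom_obj[of f a b] by blast
lemma sm_mult: "f \<in> Hom a b \<Longrightarrow> Sm (x * y) f = Sm x (Sm y f)"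
  using K(7) hom_obj[of f a b] by blast
lemma sm_add: "f \<in> Hom a b \<Longrightarrow> g \<in> Hom a b \<Longrightarrow> Sm x (Add f g) = Add (Sm x f) (Sm x g)"
  using K(7) hom_obj[of f a b] by blast
lemma cmp_add_l: "f \<in> Hom a b \<Longrightarrow> g \<in> Hom b c \<Longrightarrow> g' \<in> Hom b c \<Longrightarrow>
   Cmp (Add g g') f = Add (Cmp g f) (Cmp g' f)"
  using K(8) by blast
lemma cmp_sm_l: "f \<in> Hom a b \<Longrightarrow> g \<in> Hom b c \<Longrightarrow>
   Cmp (Sm x g) f = Sm x (Cmp g f)"
  using K(8) by blast
lemma cmp_add_r: "f \<in> Hom a b \<Longrightarrow> f' \<in> Hom a b \<Longrightarrow> g \<in> Hom b c \<Longrightarrow>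
   Cmp g (Add f f') = Add (Cmp g f) (Cmp g f')"
  using K(9) by blast
lemma cmp_sm_r: "f \<in> Hom a b \<Longrightarrow> g \<in> Hom b c \<Longrightarrow>
   Cmp g (Sm x f) = Sm x (Cmp g f)"
  using K(9) by blast

lemma zero_add: "f \<in> Hom a b \<Longrightarrow> Add (Zer a b) f = f"
proof -
  assume f: "f \<in> Hom a b"
  then have "Zer a b \<in> Hom a b" using hom_obj zero_hom by blast
  then have "Add (Zer a b) f = Add f (Zer a b)" using f add_comm by blast
  then show ?thesis using f add_zero by simp
qed

lemma neg_add: "f \<in> Hom a b \<Longrightarrow> Add (Sm (-1) f) f = Zer a b"
proof -
  assume f: "f \<in> Hom a b"
  then have "Add (Sm (-1) f) f = Add f (Sm (-1) f)" using add_comm sm_hom by blast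
  then show ?thesis using f add_neg by simp
qed

lemma cancel_l:
  assumes "x \<in> Hom a b" "y \<in> Hom a b" "y' \<in> Hom a b" "Add x y = Add x y'"
  shows "y = y'"
proof -
  have n: "Sm (-1) x \<in> Hom a b" using assms sm_hom by blast
  have "Add (Sm (-1) x) (Add x y) = Add (Sm (-1) x) (Add x y')" using assms by simp
  then have "Add (Add (Sm (-1) x) x) y = Add (Add (Sm (-1) x) x) y'"
    using add_assoc[OF n assms(1) assms(2)] add_assoc[OF n assms(1) assms(3)] by simp
  then show ?thesis using assms neg_add zero_add by simp
qed

lemma idem_zero:
  assumes "x \<in> Hom a b" "Add x x = x" shows "x = Zer a b"
proof -
  have z: "Zer a b \<in> Hom a b" using assms hom_obj zero_hom by blast
  have "Add x x = Add x (Zer a b)" using assms add_zero by simp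
  then show ?thesis using cancel_l[OF assms(1) assms(1) z] by simp
qed

lemma zero_zero: "a \<in> c_obj C \<Longrightarrow> b \<in> c_obj C \<Longrightarrow> Add (Zer a b) (Zer a b) = Zer a b"
  by (simp add: add_zero zero_hom)

lemma cmp_zero_r: "g \<in> Hom b c \<Longrightarrow> a \<in> c_obj C \<Longrightarrow> Cmp g (Zer a b) = Zer a c"
proof -
  assume g: "g \<in> Hom b c" and a: "a \<in> c_obj C"
  have z: "Zer a b \<in> Hom a b" using g a hom_obj zero_hom by blast
  have h: "Cmp g (Zer a b) \<in> Hom a c" using cmp_hom[OF z g] .
  have "Cmp g (Zer a b) = Cmp g (Add (Zer a b) (Zer a b))" using z add_zero by simp
  also have "\<dots> = Add (Cmp g (Zer a b)) (Cmp g (Zer a b))" using cmp_add_r[OF z z g] .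
  finally show ?thesis using idem_zero[OF h] by simp
qed

lemma cmp_zero_l: "f \<in> Hom a b \<Longrightarrow> c \<in> c_obj C \<Longrightarrow> Cmp (Zer b c) f = Zer a c"
proof -
  assume f: "f \<in> Hom a b" and c: "c \<in> c_obj C"
  have z: "Zer b c \<in> Hom b c" using f c hom_obj zero_hom by blast
  have h: "Cmp (Zer b c) f \<in> Hom a c" using cmp_hom[OF f z] .
  have "Cmp (Zer b c) f = Cmp (Add (Zer b c) (Zer b c)) f" using z add_zero by simp
  also have "\<dots> = Add (Cmp (Zer b c) f) (Cmp (Zer b c) f)" using cmp_add_l[OF f z z] .
  finally show ?thesis using idem_zero[OF h] by simp
qed

lemma sm_zero_scal: "f \<in> Hom a b \<Longrightarrow> Sm 0 f = Zer a b"
proof -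
  assume f: "f \<in> Hom a b"
  have "Sm 0 f = Sm (0+0) f" by simp
  also have "\<dots> = Add (Sm 0 f) (Sm 0 f)" using sm_add_scal[OF f] .
  finally show ?thesis using idem_zero[OF sm_hom[OF f]] by simp
qed

lemma sm_zero: "a \<in> c_obj C \<Longrightarrow> b \<in> c_obj C \<Longrightarrow> Sm x (Zer a b) = Zer a b"
proof -
  assume a: "a \<in> c_obj C" and b: "b \<in> c_obj C"
  have z: "Zer a b \<in> Hom a b" using a b zero_hom by blast
  have "Sm x (Zer a b) = Sm x (Add (Zer a b) (Zer a b))" using z add_zero by simp
  also have "\<dots> = Add (Sm x (Zer a b)) (Sm x (Zer a b))" using sm_add[OF z z] .
  finally show ?thesis using idem_zero[OF sm_hom[OF z]] by simp
qed

definition HA :: "'o \<Rightarrow> 'o \<Rightarrow> 'm monoid" where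
  "HA a b = \<lparr>carrier = Hom a b, mult = Add, one = Zer a b\<rparr>"

lemma HA_simps[simp]: "carrier (HA a b) = Hom a b" "mult (HA a b) = Add" "one (HA a b) = Zer a b"
  by (simp_all add: HA_def)

lemma HA_cm: "a \<in> c_obj C \<Longrightarrow> b \<in> c_obj C \<Longrightarrow> comm_monoid (HA a b)"
  by (rule comm_monoidI) (auto simp: add_hom zero_hom add_assoc zero_add add_comm)

lemma fp_map:
  assumes ab: "a \<in> c_obj C" "b \<in> c_obj C" "a' \<in> c_obj C" "b' \<in> c_obj C"
    and fin: "finite A" and f: "f \<in> A \<rightarrow> Hom a b"
    and cl: "\<And>x. x \<in> Hom a b \<Longrightarrow> \<phi> x \<in> Hom a' b'"
    and ad: "\<And>x y. x \<in> Hom a b \<Longrightarrow> y \<in> Hom a b \<Longrightarrow> \<phi> (Add x y) = Add (\<phi> x) (\<phi> y)"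
    and ze: "\<phi> (Zer a b) = Zer a' b'"
  shows "\<phi> (finprod (HA a b) f A) = finprod (HA a' b') (\<lambda>k. \<phi> (f k)) A"
  using fin f
proof (induction A rule: finite_induct)
  case empty
  interpret P: comm_monoid "HA a b" using HA_cm ab by blast
  interpret Q: comm_monoid "HA a' b'" using HA_cm ab by blast
  show ?case using ze by simp
next
  case (insert x F)
  interpret P: comm_monoid "HA a b" using HA_cm ab by blast
  interpret Q: comm_monoid "HA a' b'" using HA_cm ab by blast
  have fF: "f \<in> F \<rightarrow> Hom a b" and fx: "f x \<in> Hom a b" using insert by auto
  have pF: "(\<lambda>k. \<phi> (f k)) \<in> F \<rightarrow> Hom a' b'" using fF cl by auto
  have "\<phi> (finprod (HA a b) f (insert x F)) = \<phi> (Add (f x) (finprod (HA a b) f F))"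
    using P.finprod_insert[of F x f] insert fF fx by simp
  also have "\<dots> = Add (\<phi> (f x)) (\<phi> (finprod (HA a b) f F))"
    using ad fx P.finprod_closed[of f F] fF by simp
  also have "\<dots> = Add (\<phi> (f x)) (finprod (HA a' b') (\<lambda>k. \<phi> (f k)) F)"
    using insert fF by simp
  also have "\<dots> = finprod (HA a' b') (\<lambda>k. \<phi> (f k)) (insert x F)"
    using Q.finprod_insert[of F x "\<lambda>k. \<phi> (f k)"] insert pF cl fx by simp
  finally show ?case .
qed

lemma fp_const:
  assumes ab: "a \<in> c_obj C" "b \<in> c_obj C" and fin: "finite A" and x: "x \<in> Hom a b"
  shows "finprod (HA a b) (\<lambda>k. x) A = Sm (of_nat (card A)) x"
  using fin
proof (induction A rule: finite_induct)
  case empty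
  interpret P: comm_monoid "HA a b" using HA_cm ab by blast
  show ?case using sm_zero_scal[OF x] by simp
next
  case (insert y F)
  interpret P: comm_monoid "HA a b" using HA_cm ab by blast
  have "finprod (HA a b) (\<lambda>k. x) (insert y F) = Add x (finprod (HA a b) (\<lambda>k. x) F)"
    using P.finprod_insert[of F y "\<lambda>k. x"] insert x by auto
  also have "\<dots> = Add (Sm 1 x) (Sm (of_nat (card F)) x)" using insert sm_one[OF x] by simp
  also have "\<dots> = Sm (1 + of_nat (card F)) x" using sm_add_scal[OF x] by simp
  finally show ?case using insert by simp
qed

lemma fp_closed: "a \<in> c_obj C \<Longrightarrow> b \<in> c_obj C \<Longrightarrow> f \<in> A \<rightarrow> Hom a b \<Longrightarrow> finprod (HA a b) f A \<in> Hom a b"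
  using comm_monoid.finprod_closed[OF HA_cm, of a b f A] by simp

lemma fp_multf: "a \<in> c_obj C \<Longrightarrow> b \<in> c_obj C \<Longrightarrow> f \<in> A \<rightarrow> Hom a b \<Longrightarrow> g \<in> A \<rightarrow> Hom a b \<Longrightarrow>
   finprod (HA a b) (\<lambda>x. Add (f x) (g x)) A = Add (finprod (HA a b) f A) (finprod (HA a b) g A)"
  using comm_monoid.finprod_multf[OF HA_cm, of a b f A g] by simp

lemma fp_cong: "a \<in> c_obj C \<Longrightarrow> b \<in> c_obj C \<Longrightarrow> g \<in> A \<rightarrow> Hom a b \<Longrightarrow> (\<And>i. i \<in> A \<Longrightarrow> f i = g i) \<Longrightarrow>
   finprod (HA a b) f A = finprod (HA a b) g A"
  using comm_monoid.finprod_cong'[OF HA_cm, of a b A A g f] by simp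

lemma fp_reindex: "a \<in> c_obj C \<Longrightarrow> b \<in> c_obj C \<Longrightarrow> f \<in> (h ` A) \<rightarrow> Hom a b \<Longrightarrow> inj_on h A \<Longrightarrow>
   finprod (HA a b) f (h ` A) = finprod (HA a b) (\<lambda>x. f (h x)) A"
  using comm_monoid.finprod_reindex[OF HA_cm, of a b f h A] by simp

lemma fp_zero: "a \<in> c_obj C \<Longrightarrow> b \<in> c_obj C \<Longrightarrow> finprod (HA a b) (\<lambda>x. Zer a b) A = Zer a b"
  using comm_monoid.finprod_one[OF HA_cm, of a b A] by simp

lemma sm_sm: "f \<in> Hom a b \<Longrightarrow> Sm x (Sm y f) = Sm (x * y) f"
  using sm_mult by simp


lemma move:
  assumes "x \<in> Hom a b" "y \<in> Hom a b" "Add (Sm (-1) x) y = w"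
  shows "y = Add w x"
proof -
  have n: "Sm (-1) x \<in> Hom a b" using assms sm_hom by blast
  have "Add w x = Add (Add (Sm (-1) x) y) x" using assms by simp
  also have "\<dots> = Add (Sm (-1) x) (Add y x)" using add_assoc[OF n assms(2) assms(1)] .
  also have "\<dots> = Add (Sm (-1) x) (Add x y)" using add_comm assms by metis
  also have "\<dots> = Add (Add (Sm (-1) x) x) y" using add_assoc[OF n assms(1) assms(2)] by simp
  also have "\<dots> = y" using neg_add zero_add assms by simp
  finally show ?thesis by simp
qed

lemma main:
  fixes G :: "'g monoid" and M :: "'a monoid"
    and act :: "'g \<Rightarrow> 'a \<Rightarrow> 'a" and z :: "'g \<Rightarrow> 'g \<Rightarrow> 'g \<Rightarrow> 'a"
    and V1 V0 :: 'o
    and \<rho>1 \<rho>0 :: "'g \<Rightarrow> 'm" and \<beta> :: "'a \<Rightarrow> 'm" and c :: "'g \<Rightarrow> 'g \<Rightarrow> 'm"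
  assumes grp: "group G" and cgM: "comm_group M" and finG: "finite (carrier G)"
    and finM: "finite (carrier M)"
    and zc: "\<forall>g\<in>carrier G. \<forall>h\<in>carrier G. \<forall>k\<in>carrier G. z g h k \<in> carrier M"
    and rep: "is_rep C G M act z V1 V0 (\<rho>1, \<rho>0, \<beta>, c)"
  shows "(\<forall>a\<in>carrier M. \<beta> a = Zer V0 V1) \<and>
         rep_equiv C G M V1 V0 (\<rho>1, \<rho>0, \<lambda>a. Zer V0 V1, c)
                             V1 V0 (\<rho>1, \<rho>0, \<lambda>a. Zer V0 V1, \<lambda>g h. Zer V0 V1)"
proof -
  interpret G: group G by (rule grp)
  interpret M: comm_group M by (rule cgM)
  note R = rep[unfolded is_rep_def prod.case]
  have V1o: "V1 \<in> c_obj C" and V0o: "V0 \<in> c_obj C" using R by blast+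
  have r1h: "\<And>g. g \<in> carrier G \<Longrightarrow> \<rho>1 g \<in> Hom V1 V1" using R by blast
  have r0h: "\<And>g. g \<in> carrier G \<Longrightarrow> \<rho>0 g \<in> Hom V0 V0" using R by blast
  have bh: "\<And>a. a \<in> carrier M \<Longrightarrow> \<beta> a \<in> Hom V0 V1" using R by blast
  have ch: "\<And>g h. g \<in> carrier G \<Longrightarrow> h \<in> carrier G \<Longrightarrow> c g h \<in> Hom V0 V1" using R by blast
  have r0m: "\<And>g h. g \<in> carrier G \<Longrightarrow> h \<in> carrier G \<Longrightarrow> \<rho>0 (g \<otimes>\<^bsub>G\<^esub> h) = Cmp (\<rho>0 g) (\<rho>0 h)"
    using R by blast
  have r01: "\<rho>0 \<one>\<^bsub>G\<^esub> = c_id C V0" using R by blast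
  have c1: "\<And>g. g \<in> carrier G \<Longrightarrow> c \<one>\<^bsub>G\<^esub> g = Zer V0 V1" using R by blast
  have bm: "\<And>a b. a \<in> carrier M \<Longrightarrow> b \<in> carrier M \<Longrightarrow> \<beta> (a \<otimes>\<^bsub>M\<^esub> b) = Add (\<beta> a) (\<beta> b)"
    using R by blast
  have b1: "\<beta> \<one>\<^bsub>M\<^esub> = Zer V0 V1" using R by blast
  have coc: "\<And>g h k. g \<in> carrier G \<Longrightarrow> h \<in> carrier G \<Longrightarrow> k \<in> carrier G \<Longrightarrow>
        Add (Add (Cmp (c g h) (\<rho>0 k)) (c (g \<otimes>\<^bsub>G\<^esub> h) k)) (\<beta> (z g h k))
        = Add (Cmp (\<rho>1 g) (c h k)) (c g (h \<otimes>\<^bsub>G\<^esub> k))"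
    using R by blast
  interpret HA: comm_monoid "HA V0 V1" using HA_cm V0o V1o by blast
  have Z: "Zer V0 V1 \<in> Hom V0 V1" using V0o V1o zero_hom by blast
  have bpow: "\<beta> (a [^]\<^bsub>M\<^esub> m) = Sm (of_nat m) (\<beta> a)" if a: "a \<in> carrier M" for a m
  proof (induction m)
    case 0
    then show ?case using b1 sm_zero_scal[OF bh[OF a]] by simp
  next
    case (Suc m)
    have "\<beta> (a [^]\<^bsub>M\<^esub> Suc m) = Add (\<beta> (a [^]\<^bsub>M\<^esub> m)) (\<beta> a)"
      using bm a M.nat_pow_closed by simp
    also have "\<dots> = Add (Sm (of_nat m) (\<beta> a)) (Sm 1 (\<beta> a))" using Suc sm_one[OF bh[OF a]] by simp
    also have "\<dots> = Sm (of_nat m + 1) (\<beta> a)" using sm_add_scal[OF bh[OF a]] by simp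
    finally show ?case by (simp add: add.commute)
  qed
  have b0: "\<beta> a = Zer V0 V1" if a: "a \<in> carrier M" for a
  proof -
    define n where "n = order M"
    have npos: "n > 0" unfolding n_def order_def using finM M.one_closed card_gt_0_iff by blast
    have "Sm (of_nat n) (\<beta> a) = Zer V0 V1" using bpow[OF a, of n] M.pow_order_eq_1[OF a] b1
      unfolding n_def by simp
    then have "Sm (1 / of_nat n) (Sm (of_nat n) (\<beta> a)) = Zer V0 V1" using sm_zero V0o V1o by simp
    then show ?thesis using sm_sm[OF bh[OF a]] npos sm_one[OF bh[OF a]] by simp
  qed
  have r1m: "\<And>g h. g \<in> carrier G \<Longrightarrow> h \<in> carrier G \<Longrightarrow> \<rho>1 (g \<otimes>\<^bsub>G\<^esub> h) = Cmp (\<rho>1 g) (\<rho>1 h)"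
    using R by blast
  define n where "n = card (carrier G)"
  define nk where "nk = (of_nat n :: 'k)"
  have nk0: "nk \<noteq> 0" unfolding nk_def n_def using finG G.one_closed card_gt_0_iff by auto
  define P where "P g k = Cmp (c g k) (\<rho>0 (inv\<^bsub>G\<^esub> k))" for g k
  define S where "S g = finprod (HA V0 V1) (P g) (carrier G)" for g
  define \<theta> where "\<theta> g = Sm (-(1/nk)) (S g)" for g
  define \<theta>' where "\<theta>' g = Sm (1/nk) (S g)" for g
  have Ph: "P g k \<in> Hom V0 V1" if "g \<in> carrier G" "k \<in> carrier G" for g k
    unfolding P_def using that ch r0h cmp_hom by blast
  have PG: "P g \<in> carrier G \<rightarrow> Hom V0 V1" if "g \<in> carrier G" for g using Ph that by blast
  have Sh: "S g \<in> Hom V0 V1" if "g \<in> carrier G" for g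
    unfolding S_def using fp_closed[OF V0o V1o PG[OF that]] .
  have th: "\<theta> g \<in> Hom V0 V1" if "g \<in> carrier G" for g unfolding \<theta>_def using Sh[OF that] sm_hom by blast
  have th': "\<theta>' g \<in> Hom V0 V1" if "g \<in> carrier G" for g unfolding \<theta>'_def using Sh[OF that] sm_hom by blast
  have cancel0: "Cmp (Cmp X (\<rho>0 k)) (\<rho>0 (inv\<^bsub>G\<^esub> k)) = X" if "X \<in> Hom V0 V1" "k \<in> carrier G" for X k
  proof -
    have "Cmp (Cmp X (\<rho>0 k)) (\<rho>0 (inv\<^bsub>G\<^esub> k)) = Cmp X (Cmp (\<rho>0 k) (\<rho>0 (inv\<^bsub>G\<^esub> k)))"
      using cmp_assoc[OF r0h r0h that(1)] that by simp
    also have "\<dots> = Cmp X (\<rho>0 (k \<otimes>\<^bsub>G\<^esub> inv\<^bsub>G\<^esub> k))" using r0m[of k "inv\<^bsub>G\<^esub> k"] that by simp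
    also have "\<dots> = X" using r01 that id_r by simp
    finally show ?thesis .
  qed
  have trm: "Add (c g h) (P (g \<otimes>\<^bsub>G\<^esub> h) k) = Add (Cmp (\<rho>1 g) (P h k)) (Cmp (P g (h \<otimes>\<^bsub>G\<^esub> k)) (\<rho>0 h))"
    if g: "g \<in> carrier G" and h: "h \<in> carrier G" and k: "k \<in> carrier G" for g h k
  proof -
    have ik: "inv\<^bsub>G\<^esub> k \<in> carrier G" using k by simp
    have gh: "g \<otimes>\<^bsub>G\<^esub> h \<in> carrier G" and hk: "h \<otimes>\<^bsub>G\<^esub> k \<in> carrier G" using g h k by auto
    have e: "Add (Cmp (c g h) (\<rho>0 k)) (c (g \<otimes>\<^bsub>G\<^esub> h) k) = Add (Cmp (\<rho>1 g) (c h k)) (c g (h \<otimes>\<^bsub>G\<^esub> k))"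
      using coc[OF g h k] b0 zc g h k add_zero[OF add_hom[OF cmp_hom[OF r0h[OF k] ch[OF g h]] ch[OF gh k]]]
      by simp
    have "Add (c g h) (P (g \<otimes>\<^bsub>G\<^esub> h) k) = Cmp (Add (Cmp (c g h) (\<rho>0 k)) (c (g \<otimes>\<^bsub>G\<^esub> h) k)) (\<rho>0 (inv\<^bsub>G\<^esub> k))"
      unfolding P_def using cmp_add_l[OF r0h[OF ik] cmp_hom[OF r0h[OF k] ch[OF g h]] ch[OF gh k]]
        cancel0[OF ch[OF g h] k] by simp
    also have "\<dots> = Cmp (Add (Cmp (\<rho>1 g) (c h k)) (c g (h \<otimes>\<^bsub>G\<^esub> k))) (\<rho>0 (inv\<^bsub>G\<^esub> k))" using e by simp
    also have "\<dots> = Add (Cmp (Cmp (\<rho>1 g) (c h k)) (\<rho>0 (inv\<^bsub>G\<^esub> k))) (Cmp (c g (h \<otimes>\<^bsub>G\<^esub> k)) (\<rho>0 (inv\<^bsub>G\<^esub> k)))"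
      using cmp_add_l[OF r0h[OF ik] cmp_hom[OF ch[OF h k] r1h[OF g]] ch[OF g hk]] .
    also have "Cmp (Cmp (\<rho>1 g) (c h k)) (\<rho>0 (inv\<^bsub>G\<^esub> k)) = Cmp (\<rho>1 g) (P h k)"
      unfolding P_def using cmp_assoc[OF r0h[OF ik] ch[OF h k] r1h[OF g]] by simp
    also have "Cmp (c g (h \<otimes>\<^bsub>G\<^esub> k)) (\<rho>0 (inv\<^bsub>G\<^esub> k)) = Cmp (P g (h \<otimes>\<^bsub>G\<^esub> k)) (\<rho>0 h)"
    proof -
      have ihk: "inv\<^bsub>G\<^esub> (h \<otimes>\<^bsub>G\<^esub> k) \<in> carrier G" using hk by simp
      have "inv\<^bsub>G\<^esub> k = inv\<^bsub>G\<^esub> (h \<otimes>\<^bsub>G\<^esub> k) \<otimes>\<^bsub>G\<^esub> h"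
        using h k by (simp add: G.inv_mult_group G.m_assoc)
      then have "\<rho>0 (inv\<^bsub>G\<^esub> k) = Cmp (\<rho>0 (inv\<^bsub>G\<^esub> (h \<otimes>\<^bsub>G\<^esub> k))) (\<rho>0 h)" using r0m ihk h by simp
      then show ?thesis unfolding P_def using cmp_assoc[OF r0h[OF h] r0h[OF ihk] ch[OF g hk]] by simp
    qed
    finally show ?thesis .
  qed
  have star: "Add (Sm nk (c g h)) (S (g \<otimes>\<^bsub>G\<^esub> h)) = Add (Cmp (\<rho>1 g) (S h)) (Cmp (S g) (\<rho>0 h))"
    if g: "g \<in> carrier G" and h: "h \<in> carrier G" for g h
  proof -
    have gh: "g \<otimes>\<^bsub>G\<^esub> h \<in> carrier G" using g h by auto
    have A1: "(\<lambda>k. Cmp (\<rho>1 g) (P h k)) \<in> carrier G \<rightarrow> Hom V0 V1" using Ph h cmp_hom r1h g by blast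
    have A2: "(\<lambda>k. Cmp (P g (h \<otimes>\<^bsub>G\<^esub> k)) (\<rho>0 h)) \<in> carrier G \<rightarrow> Hom V0 V1"
      using Ph[OF g G.m_closed[OF h]] cmp_hom r0h[OF h] by blast
    have A3: "(\<lambda>k. c g h) \<in> carrier G \<rightarrow> Hom V0 V1" using ch g h by blast
    have "Add (Sm nk (c g h)) (S (g \<otimes>\<^bsub>G\<^esub> h)) = finprod (HA V0 V1) (\<lambda>k. Add (c g h) (P (g \<otimes>\<^bsub>G\<^esub> h) k)) (carrier G)"
      using fp_multf[OF V0o V1o A3 PG[OF gh]] fp_const[OF V0o V1o finG ch[OF g h]]
      unfolding S_def nk_def n_def by simp
    also have "\<dots> = finprod (HA V0 V1) (\<lambda>k. Add (Cmp (\<rho>1 g) (P h k)) (Cmp (P g (h \<otimes>\<^bsub>G\<^esub> k)) (\<rho>0 h))) (carrier G)"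
      using trm[OF g h] A1 A2 by (intro fp_cong[OF V0o V1o]) (auto intro!: add_hom)
    also have "\<dots> = Add (finprod (HA V0 V1) (\<lambda>k. Cmp (\<rho>1 g) (P h k)) (carrier G))
                       (finprod (HA V0 V1) (\<lambda>k. Cmp (P g (h \<otimes>\<^bsub>G\<^esub> k)) (\<rho>0 h)) (carrier G))"
      using fp_multf[OF V0o V1o A1 A2] by simp
    also have "finprod (HA V0 V1) (\<lambda>k. Cmp (\<rho>1 g) (P h k)) (carrier G) = Cmp (\<rho>1 g) (S h)"
      unfolding S_def
      by (rule fp_map[OF V0o V1o V0o V1o finG PG[OF h], symmetric])
         (auto intro: cmp_hom r1h g cmp_add_r cmp_zero_r V0o)
    also have "finprod (HA V0 V1) (\<lambda>k. Cmp (P g (h \<otimes>\<^bsub>G\<^esub> k)) (\<rho>0 h)) (carrier G)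
             = Cmp (finprod (HA V0 V1) (\<lambda>k. P g (h \<otimes>\<^bsub>G\<^esub> k)) (carrier G)) (\<rho>0 h)"
      by (rule fp_map[OF V0o V1o V0o V1o finG, symmetric])
         (use Ph g h in \<open>auto intro: cmp_hom r0h cmp_add_l cmp_zero_l V1o\<close>)
    also have "finprod (HA V0 V1) (\<lambda>k. P g (h \<otimes>\<^bsub>G\<^esub> k)) (carrier G) = S g"
      unfolding S_def
      using fp_reindex[OF V0o V1o, of "P g" "\<lambda>k. h \<otimes>\<^bsub>G\<^esub> k" "carrier G"] G.surj_const_mult[OF h]
        G.inj_on_cmult[OF h] PG[OF g] by simp
    finally show ?thesis .
  qed
  have scal: "Sm r (Add (Sm nk (c g h)) (S (g \<otimes>\<^bsub>G\<^esub> h))) = Add (Cmp (\<rho>1 g) (Sm r (S h))) (Cmp (Sm r (S g)) (\<rho>0 h))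
     \<and> Sm r (Add (Sm nk (c g h)) (S (g \<otimes>\<^bsub>G\<^esub> h))) = Add (Sm (r * nk) (c g h)) (Sm r (S (g \<otimes>\<^bsub>G\<^esub> h)))"
    if g: "g \<in> carrier G" and h: "h \<in> carrier G" for g h r
  proof
    have gh: "g \<otimes>\<^bsub>G\<^esub> h \<in> carrier G" using g h by auto
    show "Sm r (Add (Sm nk (c g h)) (S (g \<otimes>\<^bsub>G\<^esub> h))) = Add (Cmp (\<rho>1 g) (Sm r (S h))) (Cmp (Sm r (S g)) (\<rho>0 h))"
      using star[OF g h] sm_add[OF cmp_hom[OF Sh[OF h] r1h[OF g]] cmp_hom[OF r0h[OF h] Sh[OF g]]]
        cmp_sm_r[OF Sh[OF h] r1h[OF g]] cmp_sm_l[OF r0h[OF h] Sh[OF g]] by simp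
    show "Sm r (Add (Sm nk (c g h)) (S (g \<otimes>\<^bsub>G\<^esub> h))) = Add (Sm (r * nk) (c g h)) (Sm r (S (g \<otimes>\<^bsub>G\<^esub> h)))"
      using sm_add[OF sm_hom[OF ch[OF g h]] Sh[OF gh]] sm_sm[OF ch[OF g h]] by simp
  qed
  have eqT: "\<theta> (g \<otimes>\<^bsub>G\<^esub> h) = Add (Add (Cmp (\<rho>1 g) (\<theta> h)) (Cmp (\<theta> g) (\<rho>0 h))) (c g h)"
    if g: "g \<in> carrier G" and h: "h \<in> carrier G" for g h
  proof -
    have gh: "g \<otimes>\<^bsub>G\<^esub> h \<in> carrier G" using g h by auto
    have nn: "-(1/nk) * nk = -1" using nk0 by simp
    have "Add (Sm (-1) (c g h)) (\<theta> (g \<otimes>\<^bsub>G\<^esub> h)) = Add (Cmp (\<rho>1 g) (\<theta> h)) (Cmp (\<theta> g) (\<rho>0 h))"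
      using scal[OF g h, of "-(1/nk)", unfolded nn] unfolding \<theta>_def by metis
    then show ?thesis using move[OF ch[OF g h] th[OF gh]] by simp
  qed
  have eqT': "Add (c g h) (\<theta>' (g \<otimes>\<^bsub>G\<^esub> h)) = Add (Cmp (\<rho>1 g) (\<theta>' h)) (Cmp (\<theta>' g) (\<rho>0 h))"
    if g: "g \<in> carrier G" and h: "h \<in> carrier G" for g h
  proof -
    have nn: "(1/nk) * nk = 1" using nk0 by simp
    show ?thesis
      using scal[OF g h, of "1/nk", unfolded nn] sm_one[OF ch[OF g h]] unfolding \<theta>'_def by metis
  qed
  have S1: "S \<one>\<^bsub>G\<^esub> = Zer V0 V1"
  proof -
    have "S \<one>\<^bsub>G\<^esub> = finprod (HA V0 V1) (\<lambda>k. Zer V0 V1) (carrier G)"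
      unfolding S_def P_def
      by (rule fp_cong[OF V0o V1o]) (use Z c1 cmp_zero_l r0h V1o in auto)
    then show ?thesis using fp_zero[OF V0o V1o] by simp
  qed
  have th1: "\<theta> \<one>\<^bsub>G\<^esub> = Zer V0 V1" "\<theta>' \<one>\<^bsub>G\<^esub> = Zer V0 V1"
    unfolding \<theta>_def \<theta>'_def S1 using sm_zero V0o V1o by auto
  have sum0: "Add (\<theta>' g) (\<theta> g) = Zer V0 V1" "Add (\<theta> g) (\<theta>' g) = Zer V0 V1" if g: "g \<in> carrier G" for g
    unfolding \<theta>_def \<theta>'_def
    using sm_add_scal[OF Sh[OF g], of "1/nk" "-(1/nk)"] sm_add_scal[OF Sh[OF g], of "-(1/nk)" "1/nk"]
      sm_zero_scal[OF Sh[OF g]] by simp_all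
  have i1: "c_id C V1 \<in> Hom V1 V1" and i0: "c_id C V0 \<in> Hom V0 V0" using id_hom V0o V1o by auto
  have sA: "\<And>g. g \<in> carrier G \<Longrightarrow> Cmp (c_id C V1) (\<rho>1 g) = \<rho>1 g"
    "\<And>g. g \<in> carrier G \<Longrightarrow> Cmp (\<rho>1 g) (c_id C V1) = \<rho>1 g"
    "\<And>g. g \<in> carrier G \<Longrightarrow> Cmp (c_id C V0) (\<rho>0 g) = \<rho>0 g"
    "\<And>g. g \<in> carrier G \<Longrightarrow> Cmp (\<rho>0 g) (c_id C V0) = \<rho>0 g"
    using id_l[OF r1h] id_r[OF r1h] id_l[OF r0h] id_r[OF r0h] by auto
  have sB: "\<And>X. X \<in> Hom V0 V1 \<Longrightarrow> Cmp (c_id C V1) X = X"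
    "\<And>X. X \<in> Hom V0 V1 \<Longrightarrow> Cmp X (c_id C V0) = X"
    "\<And>X. X \<in> Hom V0 V1 \<Longrightarrow> Add (Zer V0 V1) X = X"
    "\<And>X. X \<in> Hom V0 V1 \<Longrightarrow> Add X (Zer V0 V1) = X"
    using id_l id_r zero_add add_zero by auto
  have sC: "\<And>g. g \<in> carrier G \<Longrightarrow> Cmp (\<rho>1 g) (Zer V0 V1) = Zer V0 V1"
    "\<And>g. g \<in> carrier G \<Longrightarrow> Cmp (Zer V0 V1) (\<rho>0 g) = Zer V0 V1"
    using cmp_zero_r[OF r1h V0o] cmp_zero_l[OF r0h V1o] by auto
  have sD: "\<And>g. g \<in> carrier G \<Longrightarrow> Cmp (c_id C V1) (\<theta> g) = \<theta> g"
    "\<And>g. g \<in> carrier G \<Longrightarrow> Cmp (\<theta> g) (c_id C V0) = \<theta> g"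
    "\<And>g. g \<in> carrier G \<Longrightarrow> Cmp (c_id C V1) (\<theta>' g) = \<theta>' g"
    "\<And>g. g \<in> carrier G \<Longrightarrow> Cmp (\<theta>' g) (c_id C V0) = \<theta>' g"
    "\<And>g h. g \<in> carrier G \<Longrightarrow> h \<in> carrier G \<Longrightarrow> Cmp (c_id C V1) (c g h) = c g h"
    "\<And>g h. g \<in> carrier G \<Longrightarrow> h \<in> carrier G \<Longrightarrow> Cmp (c g h) (c_id C V0) = c g h"
    using sB(1,2)[OF th] sB(1,2)[OF th'] sB(1,2)[OF ch] by auto
  have sE: "\<And>g. g \<in> carrier G \<Longrightarrow> Add (Zer V0 V1) (\<theta> g) = \<theta> g"
    "\<And>g. g \<in> carrier G \<Longrightarrow> Add (\<theta> g) (Zer V0 V1) = \<theta> g"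
    "\<And>g. g \<in> carrier G \<Longrightarrow> Add (Zer V0 V1) (\<theta>' g) = \<theta>' g"
    "\<And>g. g \<in> carrier G \<Longrightarrow> Add (\<theta>' g) (Zer V0 V1) = \<theta>' g"
    using sB(3,4)[OF th] sB(3,4)[OF th'] by auto
  have ZZ: "Add (Zer V0 V1) (Zer V0 V1) = Zer V0 V1" using zero_zero V0o V1o by blast
  have sF: "Cmp (c_id C V1) (c_id C V1) = c_id C V1" "Cmp (c_id C V0) (c_id C V0) = c_id C V0"
    "Cmp (Zer V0 V1) (c_id C V0) = Zer V0 V1" "Cmp (c_id C V1) (Zer V0 V1) = Zer V0 V1"
    using id_l[OF i1] id_l[OF i0] sB(1,2)[OF Z] by auto
  have eqT2: "\<And>g h. g \<in> carrier G \<Longrightarrow> h \<in> carrier G \<Longrightarrow> Add (Add (Cmp (\<rho>1 g) (\<theta>' h)) (Cmp (\<theta>' g) (\<rho>0 h))) (Zer V0 V1)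
     = Add (Cmp (\<rho>1 g) (\<theta>' h)) (Cmp (\<theta>' g) (\<rho>0 h))"
  proof -
    fix g h assume g: "g \<in> carrier G" and h: "h \<in> carrier G"
    show "Add (Add (Cmp (\<rho>1 g) (\<theta>' h)) (Cmp (\<theta>' g) (\<rho>0 h))) (Zer V0 V1)
     = Add (Cmp (\<rho>1 g) (\<theta>' h)) (Cmp (\<theta>' g) (\<rho>0 h))"
      using sB(4)[OF add_hom[OF cmp_hom[OF th'[OF h] r1h[OF g]] cmp_hom[OF r0h[OF h] th'[OF g]]]] .
  qed
  have eqTz: "\<And>g h. g \<in> carrier G \<Longrightarrow> h \<in> carrier G \<Longrightarrow> Add (Zer V0 V1) (\<theta> (g \<otimes>\<^bsub>G\<^esub> h))
     = Add (Add (Cmp (\<rho>1 g) (\<theta> h)) (Cmp (\<theta> g) (\<rho>0 h))) (c g h)"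
    using sE(1)[OF G.m_closed] eqT by metis
  have eqTzz: "\<And>g h. g \<in> carrier G \<Longrightarrow> h \<in> carrier G \<Longrightarrow>
     Add (Zer V0 V1) (Add (Add (Cmp (\<rho>1 g) (\<theta> h)) (Cmp (\<theta> g) (\<rho>0 h))) (c g h))
     = Add (Add (Cmp (\<rho>1 g) (\<theta> h)) (Cmp (\<theta> g) (\<rho>0 h))) (c g h)"
    using sB(3)[OF add_hom[OF add_hom[OF cmp_hom[OF th r1h] cmp_hom[OF r0h th]] ch]] by blast
  have T1: "is_trans C G M V1 V0 (\<rho>1, \<rho>0, \<lambda>a. Zer V0 V1, c) V1 V0 (\<rho>1, \<rho>0, \<lambda>a. Zer V0 V1, \<lambda>g h. Zer V0 V1)
      (c_id C V1, c_id C V0, \<theta>)"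
    unfolding is_trans_def prod.case
    by (intro conjI ballI) (simp_all add: i1 i0 th sA sD sE sF eqTzz eqT th1)
  have T2: "is_trans C G M V1 V0 (\<rho>1, \<rho>0, \<lambda>a. Zer V0 V1, \<lambda>g h. Zer V0 V1) V1 V0 (\<rho>1, \<rho>0, \<lambda>a. Zer V0 V1, c)
      (c_id C V1, c_id C V0, \<theta>')"
    unfolding is_trans_def prod.case
    by (intro conjI ballI) (simp_all add: i1 i0 th' sA sD sE sF eqT' th1 eqT2)
  have M1: "is_inv_modif C G V1 V0 (\<rho>1, \<rho>0, \<lambda>a. Zer V0 V1, c) V1 V0 (\<rho>1, \<rho>0, \<lambda>a. Zer V0 V1, c)
     (trans_comp C (c_id C V1, c_id C V0, \<theta>') (c_id C V1, c_id C V0, \<theta>)) (trans_id C V1 V0) (Zer V0 V1)"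
    unfolding is_inv_modif_def is_modif_def trans_comp_def trans_id_def prod.case
    by (intro conjI ballI exI[of _ "Zer V0 V1"]) (simp_all add: Z sC sD sF ZZ sum0)
  have M2: "is_inv_modif C G V1 V0 (\<rho>1, \<rho>0, \<lambda>a. Zer V0 V1, \<lambda>g h. Zer V0 V1) V1 V0 (\<rho>1, \<rho>0, \<lambda>a. Zer V0 V1, \<lambda>g h. Zer V0 V1)
     (trans_comp C (c_id C V1, c_id C V0, \<theta>) (c_id C V1, c_id C V0, \<theta>')) (trans_id C V1 V0) (Zer V0 V1)"
    unfolding is_inv_modif_def is_modif_def trans_comp_def trans_id_def prod.case
    by (intro conjI ballI exI[of _ "Zer V0 V1"]) (simp_all add: Z sC sD sF ZZ sum0)
  have RE: "rep_equiv C G M V1 V0 (\<rho>1, \<rho>0, \<lambda>a. Zer V0 V1, c)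
                             V1 V0 (\<rho>1, \<rho>0, \<lambda>a. Zer V0 V1, \<lambda>g h. Zer V0 V1)"
    unfolding rep_equiv_def
    apply (rule exI[of _ "(c_id C V1, c_id C V0, \<theta>)"])
    apply (rule exI[of _ "(c_id C V1, c_id C V0, \<theta>')"])
    apply (rule exI[of _ "Zer V0 V1"])
    apply (rule exI[of _ "Zer V0 V1"])
    using T1 T2 M1 M2 by (intro conjI)
  show ?thesis using b0 RE by blast
qed

end
theorem mainTheorem5:
  fixes C :: "('o, 'm, 'k::field_char_0) kcat"
    and G :: "'g monoid" and M :: "'a monoid"
    and act :: "'g \<Rightarrow> 'a \<Rightarrow> 'a" and z :: "'g \<Rightarrow> 'g \<Rightarrow> 'g \<Rightarrow> 'a"
    and V1 V0 :: 'o
    and \<rho>1 \<rho>0 :: "'g \<Rightarrow> 'm" and \<beta> :: "'a \<Rightarrow> 'm" and c :: "'g \<Rightarrow> 'g \<Rightarrow> 'm"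
  assumes "abelian_kcat C" and "split_cat C"
    and "skeletal_2group G M act z"
    and "finite (carrier G)" and "finite (carrier M)"
    and "V1 \<in> c_obj C" and "V0 \<in> c_obj C"
    and "is_rep C G M act z V1 V0 (\<rho>1, \<rho>0, \<beta>, c)"
  shows "(\<forall>a\<in>carrier M. \<beta> a = c_zero C V0 V1) \<and>
         rep_equiv C G M V1 V0 (\<rho>1, \<rho>0, \<lambda>a. c_zero C V0 V1, c)
                             V1 V0 (\<rho>1, \<rho>0, \<lambda>a. c_zero C V0 V1, \<lambda>g h. c_zero C V0 V1)"
proof -
  have kl: "klinear_cat C" using assms(1) unfolding abelian_kcat_def by blast
  interpret kc C by (rule kc.intro[OF kl])
  have sk: "group G" "comm_group M"
    "\<forall>g\<in>carrier G. \<forall>h\<in>carrier G. \<forall>k\<in>carrier G. z g h k \<in> carrier M"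
    using assms(3) unfolding skeletal_2group_def by blast+
  show ?thesis using main[OF sk(1) sk(2) assms(4) assms(5) sk(3) assms(8)] by simp
qed

end
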